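(* Let $q$ be even and let $V$ be a $(2m+1)$-dimensional vector space over $\mathbb F_q$ with a nonsingular quadratic form $Q$. Let $W,W'$ be nondegenerate hyperplanes of $V$ (not necessarily of the same type). Then $\Omega(W)\cap\mathrm O(W')\leq\Omega(W')$, as subgroups of the isometry group of $(V,Q)$.
   Context: $Q$ nonsingular means that there is no nonzero $v$ in the radical $V^\perp$ of the associated bilinear form with $Q(v)=0$; then $V^\perp$ is $1$-dimensional. A nondegenerate hyperplane is a hyperplane $W$ with $V=W\oplus V^\perp$ (so $Q|_W$ is nondegenerate). For such $W$, $\mathrm O(W)$ (equal to $\mathrm{SO}(W)$ as $q$ is even) is identified with the group of isometries of $V$ stabilizing $W$ and acting trivially on $V^\perp$, and $\Omega(W)$ is its index-$2$ subgroup, which consists of the $g\in\mathrm O(W)$ with $\dim C_W(g)$ even. *)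

theory Defs
  imports "HOL-Analysis.Analysis"
begin

text \<open>The ambient space V is 'k^'n (a finite-dimensional vector space over the field 'k,
  with dimension CARD('n)); scalar multiplication is (*s).\<close>

text \<open>Polar (associated) bilinear form of Q.\<close>
definition polar :: "('k::field ^ 'n \<Rightarrow> 'k) \<Rightarrow> 'k ^ 'n \<Rightarrow> 'k ^ 'n \<Rightarrow> 'k" where
  "polar Q u v = Q (u + v) - Q u - Q v"

text \<open>Q is a quadratic form: homogeneous of degree 2 with bilinear polar form.\<close>
definition quadratic_form :: "('k::field ^ 'n \<Rightarrow> 'k) \<Rightarrow> bool" where
  "quadratic_form Q \<longleftrightarrow>
     (\<forall>c v. Q (c *s v) = c^2 * Q v) \<and>
     (\<forall>v. Vector_Spaces.linear (*s) (*) (\<lambda>u. polar Q u v)) \<and>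
     (\<forall>u. Vector_Spaces.linear (*s) (*) (\<lambda>v. polar Q u v))"

text \<open>Radical V^perp of the associated bilinear form.\<close>
definition radical :: "('k::field ^ 'n \<Rightarrow> 'k) \<Rightarrow> ('k ^ 'n) set" where
  "radical Q = {v. \<forall>u. polar Q v u = 0}"

text \<open>Nonsingular: no nonzero singular vector in the radical.\<close>
definition nonsingular :: "('k::field ^ 'n \<Rightarrow> 'k) \<Rightarrow> bool" where
  "nonsingular Q \<longleftrightarrow> quadratic_form Q \<and> (\<forall>v \<in> radical Q. Q v = 0 \<longrightarrow> v = 0)"

text \<open>Nondegenerate hyperplane: a hyperplane W with V = W \<oplus> V^perp.\<close>
definition nondeg_hyperplane :: "('k::field ^ 'n \<Rightarrow> 'k) \<Rightarrow> ('k ^ 'n) set \<Rightarrow> bool" where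
  "nondeg_hyperplane Q W \<longleftrightarrow>
     vec.subspace W \<and> vec.dim W + 1 = CARD('n) \<and>
     W \<inter> radical Q = {0} \<and>
     {w + r | w r. w \<in> W \<and> r \<in> radical Q} = UNIV"

text \<open>Isometries of (V,Q): invertible linear maps preserving Q.\<close>
definition isometry :: "('k::field ^ 'n \<Rightarrow> 'k) \<Rightarrow> ('k ^ 'n \<Rightarrow> 'k ^ 'n) \<Rightarrow> bool" where
  "isometry Q g \<longleftrightarrow> Vector_Spaces.linear (*s) (*s) g \<and> bij g \<and> (\<forall>v. Q (g v) = Q v)"

text \<open>O(W), as the group of isometries of V stabilizing W and acting trivially on V^perp.\<close>
definition orth_group :: "('k::field ^ 'n \<Rightarrow> 'k) \<Rightarrow> ('k ^ 'n) set \<Rightarrow> ('k ^ 'n \<Rightarrow> 'k ^ 'n) set" where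
  "orth_group Q W = {g. isometry Q g \<and> g ` W = W \<and> (\<forall>r \<in> radical Q. g r = r)}"

text \<open>Omega(W): elements g of O(W) with dim C_W(g) even.\<close>
definition Omega_group :: "('k::field ^ 'n \<Rightarrow> 'k) \<Rightarrow> ('k ^ 'n) set \<Rightarrow> ('k ^ 'n \<Rightarrow> 'k ^ 'n) set" where
  "Omega_group Q W = {g \<in> orth_group Q W. even (vec.dim {w \<in> W. g w = w})}"

end

theory Submission
  imports Defs
begin

lemma lin_add:
  assumes "Vector_Spaces.linear s1 s2 f"
  shows "f (x + y) = f x + f y" "f (s1 c x) = s2 c (f x)"
  using assms unfolding Vector_Spaces.linear_def module_hom_iff by blast+

lemma lin_facts:
  fixes f :: "'b::ab_group_add \<Rightarrow> 'c::ab_group_add"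
  assumes "Vector_Spaces.linear s1 s2 f"
  shows "f 0 = 0" "f (x + y) = f x + f y" "f (s1 c x) = s2 c (f x)"
proof -
  have "f (0 + 0) = f 0 + f 0" by (rule lin_add(1)[OF assms])
  then show "f 0 = 0" by simp
qed (rule lin_add[OF assms])+

lemma radical_subspace:
  assumes "quadratic_form Q"
  shows "vec.subspace (radical Q)"
proof -
  have lin: "\<And>u. Vector_Spaces.linear (*s) (*) (\<lambda>v. polar Q v u)"
    using assms unfolding quadratic_form_def by blast
  show ?thesis
    unfolding vec.subspace_def radical_def
  proof (intro conjI allI ballI impI; simp)
    show "\<forall>u. polar Q 0 u = 0"
      using lin by (simp add: lin_facts[OF lin])
  next
    fix x y assume "\<forall>u. polar Q x u = 0" "\<forall>u. polar Q y u = 0"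
    then show "\<forall>u. polar Q (x + y) u = 0"
      using lin by (simp add: lin_facts[OF lin])
  next
    fix c x assume "\<forall>u. polar Q x u = 0"
    then show "\<forall>u. polar Q (c *s x) u = 0"
      using lin by (simp add: lin_facts[OF lin])
  qed
qed

lemma fix_dim:
  fixes g :: "'k::field ^ 'n \<Rightarrow> 'k ^ 'n"
  assumes W: "vec.subspace W" and R: "vec.subspace R"
    and WR: "W \<inter> R = {0}" and sum: "{w + r | w r. w \<in> W \<and> r \<in> R} = UNIV"
    and lin: "Vector_Spaces.linear (*s) (*s) g" and gW: "g ` W = W"
    and gR: "\<forall>r\<in>R. g r = r"
  shows "vec.dim {w \<in> W. g w = w} + vec.dim R = vec.dim {v. g v = v}"
proof -
  let ?C = "{w \<in> W. g w = w}"
  have C: "vec.subspace ?C"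
    using W unfolding vec.subspace_def
    by (auto simp: lin_facts[OF lin])
  have CR: "?C \<inter> R = {0}"
    using WR C R vec.subspace_0 by auto
  have eq: "{x + y |x y. x \<in> ?C \<and> y \<in> R} = {v. g v = v}"
  proof (intro set_eqI iffI)
    fix v assume "v \<in> {x + y |x y. x \<in> ?C \<and> y \<in> R}"
    then show "v \<in> {v. g v = v}" using gR by (auto simp: lin_facts[OF lin])
  next
    fix v assume v: "v \<in> {v. g v = v}"
    have "v \<in> {w + r | w r. w \<in> W \<and> r \<in> R}" using sum by simp
    then obtain w r where wr: "v = w + r" "w \<in> W" "r \<in> R" by blast
    have "g v = g w + r" using wr gR by (simp add: lin_facts[OF lin])
    with v wr have "g w + r = w + r" by simp
    hence "g w = w" by (metis add_right_cancel)
    with wr show "v \<in> {x + y |x y. x \<in> ?C \<and> y \<in> R}" by blast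
  qed
  have "vec.dim {x + y |x y. x \<in> ?C \<and> y \<in> R} + vec.dim (?C \<inter> R) = vec.dim ?C + vec.dim R"
    by (rule vec.dim_sums_Int[OF C R])
  then show ?thesis using eq CR by simp
qed

theorem mainTheorem14:
  fixes Q :: "'k::{field,finite} ^ 'n \<Rightarrow> 'k" and W W' :: "('k ^ 'n) set" and m :: nat
  assumes "even CARD('k)"
    and "CARD('n) = 2 * m + 1"
    and "nonsingular Q"
    and "nondeg_hyperplane Q W"
    and "nondeg_hyperplane Q W'"
  shows "Omega_group Q W \<inter> orth_group Q W' \<subseteq> Omega_group Q W'"
proof
  fix g assume g: "g \<in> Omega_group Q W \<inter> orth_group Q W'"
  have R: "vec.subspace (radical Q)"
    using assms(3) radical_subspace unfolding nonsingular_def by blast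
  have gW: "g \<in> orth_group Q W" and ev: "even (vec.dim {w \<in> W. g w = w})"
    and gW': "g \<in> orth_group Q W'"
    using g unfolding Omega_group_def by auto
  have d1: "vec.dim {w \<in> W. g w = w} + vec.dim (radical Q) = vec.dim {v. g v = v}"
    apply (rule fix_dim)
    using assms(4) gW R unfolding nondeg_hyperplane_def orth_group_def isometry_def by auto
  have d2: "vec.dim {w \<in> W'. g w = w} + vec.dim (radical Q) = vec.dim {v. g v = v}"
    apply (rule fix_dim)
    using assms(5) gW' R unfolding nondeg_hyperplane_def orth_group_def isometry_def by auto
  from d1 d2 have "vec.dim {w \<in> W'. g w = w} = vec.dim {w \<in> W. g w = w}" by linarith
  with ev have "even (vec.dim {w \<in> W'. g w = w})" by simp
  with gW' show "g \<in> Omega_group Q W'" unfolding Omega_group_def by simp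
qed

end
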